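(* Let $G$ be a bipartite graph with bipartition $\{X,Y\}$, and let $(S,T)$ be a minimum barrier of $G$. Then: (i) $T\subseteq X$; (ii) for each component $C$ of $G-(S\cup T)$ that is not $T$-odd, $\varepsilon_G(T,C)=0$; (iii) for each $T$-odd component $C$ of $G-(S\cup T)$ and each $u\in T$, $\varepsilon_G(u,C)\le 1$; (iv) if $O_1,\dots,O_q$ are the $T$-odd components of $G-(S\cup T)$, where $q=q(S,T)$, then $|T|-|S|>\frac12\sum_{i=1}^{q}\big(\varepsilon_G(T,O_i)-1\big)$.
   Context: For disjoint $A,B\subseteq V(G)$, $\varepsilon_G(A,B)$ is the number of edges with one endpoint in $A$ and the other in $B$; for a subgraph $C$, $\varepsilon_G(A,C)=\varepsilon_G(A,V(C))$, and $\varepsilon_G(u,C)=\varepsilon_G(\{u\},C)$. For $S\subseteq X$ and $T\subseteq X\cup Y$ with $S\cap T=\varnothing$: a component $C$ of $G-(S\cup T)$ is $T$-odd if $\varepsilon_G(T,C)$ is odd; $q(S,T)$ is the number of $T$-odd components; $\delta(S,T)=2|S|+\sum_{v\in T}\deg_{G-S}(v)-2|T\cap X|-q(S,T)$. Such a pair $(S,T)$ is a barrier if $\delta(S,T)<0$; its size is $|S\cup T|$; a minimum barrier is a barrier of smallest possible size. *)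

theory Defs
  imports Complex_Main
begin

definition simple_graph :: "'a set \<Rightarrow> ('a \<Rightarrow> 'a \<Rightarrow> bool) \<Rightarrow> bool" where
  "simple_graph V E \<longleftrightarrow> finite V \<and> (\<forall>u v. E u v \<longrightarrow> E v u) \<and> (\<forall>v. \<not> E v v)
     \<and> (\<forall>u v. E u v \<longrightarrow> u \<in> V \<and> v \<in> V)"

definition bipartite_with :: "'a set \<Rightarrow> ('a \<Rightarrow> 'a \<Rightarrow> bool) \<Rightarrow> 'a set \<Rightarrow> 'a set \<Rightarrow> bool" where
  "bipartite_with V E X Y \<longleftrightarrow> simple_graph V E \<and> X \<union> Y = V \<and> X \<inter> Y = {}
     \<and> (\<forall>u v. E u v \<longrightarrow> (u \<in> X \<and> v \<in> Y) \<or> (u \<in> Y \<and> v \<in> X))"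

definition eps :: "('a \<Rightarrow> 'a \<Rightarrow> bool) \<Rightarrow> 'a set \<Rightarrow> 'a set \<Rightarrow> nat" where
  "eps E A B = card {(a, b). a \<in> A \<and> b \<in> B \<and> E a b}"

definition components :: "('a \<Rightarrow> 'a \<Rightarrow> bool) \<Rightarrow> 'a set \<Rightarrow> 'a set set" where
  "components E W = {{v. (\<lambda>x y. x \<in> W \<and> y \<in> W \<and> E x y)\<^sup>*\<^sup>* u v} | u. u \<in> W}"

definition deg_minus :: "'a set \<Rightarrow> ('a \<Rightarrow> 'a \<Rightarrow> bool) \<Rightarrow> 'a set \<Rightarrow> 'a \<Rightarrow> nat" where
  "deg_minus V E S v = card {w \<in> V - S. E v w}"

definition T_odd :: "('a \<Rightarrow> 'a \<Rightarrow> bool) \<Rightarrow> 'a set \<Rightarrow> 'a set \<Rightarrow> bool" where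
  "T_odd E T C \<longleftrightarrow> odd (eps E T C)"

definition odd_comps :: "'a set \<Rightarrow> ('a \<Rightarrow> 'a \<Rightarrow> bool) \<Rightarrow> 'a set \<Rightarrow> 'a set \<Rightarrow> 'a set set" where
  "odd_comps V E S T = {C \<in> components E (V - (S \<union> T)). T_odd E T C}"

definition qST :: "'a set \<Rightarrow> ('a \<Rightarrow> 'a \<Rightarrow> bool) \<Rightarrow> 'a set \<Rightarrow> 'a set \<Rightarrow> nat" where
  "qST V E S T = card (odd_comps V E S T)"

definition delta :: "'a set \<Rightarrow> ('a \<Rightarrow> 'a \<Rightarrow> bool) \<Rightarrow> 'a set \<Rightarrow> 'a set \<Rightarrow> 'a set \<Rightarrow> int" where
  "delta V E X S T = 2 * int (card S) + int (\<Sum>v\<in>T. deg_minus V E S v)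
      - 2 * int (card (T \<inter> X)) - int (qST V E S T)"

definition barrier :: "'a set \<Rightarrow> ('a \<Rightarrow> 'a \<Rightarrow> bool) \<Rightarrow> 'a set \<Rightarrow> 'a set \<Rightarrow> 'a set \<Rightarrow> 'a set \<Rightarrow> bool" where
  "barrier V E X Y S T \<longleftrightarrow> S \<subseteq> X \<and> T \<subseteq> X \<union> Y \<and> S \<inter> T = {} \<and> delta V E X S T < 0"

definition min_barrier :: "'a set \<Rightarrow> ('a \<Rightarrow> 'a \<Rightarrow> bool) \<Rightarrow> 'a set \<Rightarrow> 'a set \<Rightarrow> 'a set \<Rightarrow> 'a set \<Rightarrow> bool" where
  "min_barrier V E X Y S T \<longleftrightarrow> barrier V E X Y S T \<and>
     (\<forall>S' T'. barrier V E X Y S' T' \<longrightarrow> card (S \<union> T) \<le> card (S' \<union> T'))"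

end

theory Submission
  imports Defs
begin

definition compo :: "('a \<Rightarrow> 'a \<Rightarrow> bool) \<Rightarrow> 'a set \<Rightarrow> 'a \<Rightarrow> 'a set" where
 "compo E W u = {v. (\<lambda>x y. x \<in> W \<and> y \<in> W \<and> E x y)\<^sup>*\<^sup>* u v}"

lemma components_alt: "components E W = compo E W ` W"
  unfolding components_def compo_def by auto

lemma rt_in_W: "(\<lambda>x y. x \<in> W \<and> y \<in> W \<and> E x y)\<^sup>*\<^sup>* u v \<Longrightarrow> u \<in> W \<Longrightarrow> v \<in> W"
  by (induction rule: rtranclp_induct) auto

lemma compo_sub: "u \<in> W \<Longrightarrow> compo E W u \<subseteq> W"
  unfolding compo_def using rt_in_W by fast

lemma compo_self: "u \<in> compo E W u"
  unfolding compo_def by simp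

lemma rt_sym:
  assumes "\<forall>u v. E u v \<longrightarrow> E v u"
  shows "(\<lambda>x y. x \<in> W \<and> y \<in> W \<and> E x y)\<^sup>*\<^sup>* u v \<Longrightarrow> (\<lambda>x y. x \<in> W \<and> y \<in> W \<and> E x y)\<^sup>*\<^sup>* v u"
proof (induction rule: rtranclp_induct)
  case base then show ?case by simp
next
  case (step y z)
  then show ?case using assms by (auto intro: converse_rtranclp_into_rtranclp)
qed

lemma compo_eq:
  assumes "\<forall>u v. E u v \<longrightarrow> E v u" "v \<in> compo E W u"
  shows "compo E W v = compo E W u"
proof -
  let ?R = "(\<lambda>x y. x \<in> W \<and> y \<in> W \<and> E x y)"
  have uv: "?R\<^sup>*\<^sup>* u v" using assms(2) unfolding compo_def by simp
  have vu: "?R\<^sup>*\<^sup>* v u" using rt_sym[OF assms(1) uv] .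
  show ?thesis unfolding compo_def
  proof (intro set_eqI iffI; unfold mem_Collect_eq)
    fix x assume "?R\<^sup>*\<^sup>* v x" then show "?R\<^sup>*\<^sup>* u x" using uv by (rule rtranclp_trans[rotated])
  next
    fix x assume "?R\<^sup>*\<^sup>* u x" then show "?R\<^sup>*\<^sup>* v x" using vu by (rule rtranclp_trans[rotated])
  qed
qed

lemma compo_closed:
  assumes "y \<in> compo E W u" "z \<in> W" "y \<in> W" "E y z"
  shows "z \<in> compo E W u"
proof -
  let ?R = "(\<lambda>x y. x \<in> W \<and> y \<in> W \<and> E x y)"
  have 1: "?R\<^sup>*\<^sup>* u y" using assms(1) unfolding compo_def by simp
  have 2: "?R y z" using assms(2-4) by simp
  show ?thesis unfolding compo_def mem_Collect_eq by (rule rtranclp.rtrancl_into_rtrancl[OF 1 2])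
qed

lemma comp_of_member:
  assumes "\<forall>u v. E u v \<longrightarrow> E v u" "C \<in> components E W" "w \<in> C"
  shows "C = compo E W w"
proof -
  obtain x where x: "C = compo E W x" using assms(2) unfolding components_alt by blast
  then have "w \<in> compo E W x" using assms(3) by simp
  from compo_eq[OF assms(1) this] x show ?thesis by simp
qed

lemma comps_disj:
  assumes "\<forall>u v. E u v \<longrightarrow> E v u" "C1 \<in> components E W" "C2 \<in> components E W" "w \<in> C1" "w \<in> C2"
  shows "C1 = C2"
  using comp_of_member assms by metis

lemma comps_sub: "C \<in> components E W \<Longrightarrow> C \<subseteq> W"
  unfolding components_alt using compo_sub by fast

lemma comps_Union: "\<Union>(components E W) = W"
  unfolding components_alt using compo_sub compo_self by fast

lemma comps_finite: "finite W \<Longrightarrow> finite (components E W)"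
  unfolding components_alt by simp

lemma parity_sum: "finite A \<Longrightarrow> even ((\<Sum>C\<in>A. (f C::nat)) + card {C\<in>A. odd (f C)})"
proof (induction A rule: finite_induct)
  case empty then show ?case by simp
next
  case (insert x F)
  have "{C\<in>insert x F. odd (f C)} = (if odd (f x) then insert x {C\<in>F. odd (f C)} else {C\<in>F. odd (f C)})"
    by auto
  then show ?case using insert by auto
qed

lemma pick:
  assumes "finite N" "B \<subseteq> N"
    "\<forall>C1\<in>A. \<forall>C2\<in>A. \<forall>w. w\<in>C1 \<longrightarrow> w\<in>C2 \<longrightarrow> C1 = C2"
    "\<forall>C\<in>A. \<exists>w\<in>C. w \<in> N \<and> w \<notin> B"
  shows "card A + card B \<le> card N"
proof -
  define f where "f C = (SOME w. w\<in>C \<and> w \<in> N \<and> w \<notin> B)" for C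
  have f: "f C \<in> C \<and> f C \<in> N \<and> f C \<notin> B" if "C \<in> A" for C
  proof -
    have "\<exists>w. w\<in>C \<and> w \<in> N \<and> w \<notin> B" using assms(4) that by blast
    from someI_ex[OF this] show ?thesis unfolding f_def by blast
  qed
  have inj: "inj_on f A" using f assms(3) by (metis inj_onI)
  have "f ` A \<subseteq> N - B" using f by blast
  then have "card (f ` A) \<le> card (N - B)" using assms(1) by (intro card_mono) auto
  moreover have "card (N - B) = card N - card B" using assms(1,2) by (simp add: card_Diff_subset finite_subset)
  moreover have "card B \<le> card N" using assms by (simp add: card_mono)
  ultimately show ?thesis using card_image[OF inj] by linarith
qed


lemma sg_sym: "simple_graph V E \<Longrightarrow> \<forall>u v. E u v \<longrightarrow> E v u"
  unfolding simple_graph_def by blast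

lemma odd_comps_finite: "simple_graph V E \<Longrightarrow> finite (odd_comps V E S T)"
  unfolding odd_comps_def simple_graph_def using comps_finite[of "V - (S \<union> T)" E] by auto

lemma qST_remove:
  assumes sg: "simple_graph V E" and u: "u \<in> T" "u \<notin> S" "u \<in> V"
  shows "qST V E S T \<le> qST V E S (T - {u}) + card {C \<in> odd_comps V E S T. \<exists>w\<in>C. E u w}"
proof -
  let ?W = "V - (S \<union> T)"
  let ?A = "{C \<in> odd_comps V E S T. \<exists>w\<in>C. E u w}"
  have sym: "\<forall>u v. E u v \<longrightarrow> E v u" using sg_sym[OF sg] .
  have W': "V - (S \<union> (T - {u})) = insert u ?W" using u by auto
  have sub: "odd_comps V E S T - ?A \<subseteq> odd_comps V E S (T - {u})"
  proof
    fix C assume C: "C \<in> odd_comps V E S T - ?A"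
    then have Cc: "C \<in> components E ?W" and Co: "odd (eps E T C)" and na: "\<forall>w\<in>C. \<not> E u w"
      unfolding odd_comps_def T_odd_def by auto
    then obtain x where x: "x \<in> ?W" "C = compo E ?W x" unfolding components_alt by auto
    have "compo E (insert u ?W) x \<subseteq> compo E ?W x"
    proof
      fix v assume "v \<in> compo E (insert u ?W) x"
      then have "(\<lambda>a b. a \<in> insert u ?W \<and> b \<in> insert u ?W \<and> E a b)\<^sup>*\<^sup>* x v" unfolding compo_def by simp
      then show "v \<in> compo E ?W x"
      proof (induction rule: rtranclp_induct)
        case base then show ?case by (rule compo_self)
      next
        case (step y z)
        have yW: "y \<in> ?W" using step(3) compo_sub[OF x(1)] by blast
        have "z \<noteq> u" using step(2,3) na x(2) sym by blast
        then have "z \<in> ?W" using step(2) by blast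
        then show ?case using compo_closed[OF step(3) _ yW] step(2) by blast
      qed
    qed
    moreover have "compo E ?W x \<subseteq> compo E (insert u ?W) x"
      unfolding compo_def by (auto elim: rtranclp_mono[THEN predicate2D, rotated])
    ultimately have "C = compo E (insert u ?W) x" using x by blast
    then have "C \<in> compo E (insert u ?W) ` (insert u ?W)" using x(1) by blast
    then have "C \<in> components E (V - (S \<union> (T - {u})))" unfolding components_alt W' .
    moreover have "eps E (T - {u}) C = eps E T C"
      unfolding eps_def using na by (intro arg_cong[where f=card]) auto
    ultimately show "C \<in> odd_comps V E S (T - {u})" using Co unfolding odd_comps_def T_odd_def by simp
  qed
  have fin: "finite (odd_comps V E S T)" "finite (odd_comps V E S (T - {u}))" using odd_comps_finite[OF sg] by auto
  have "card (odd_comps V E S T) \<le> card (odd_comps V E S T - ?A) + card ?A"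
  proof -
    have "(odd_comps V E S T - ?A) \<union> ?A = odd_comps V E S T" by blast
    then show ?thesis using card_Un_le[of "odd_comps V E S T - ?A" ?A] by simp
  qed
  moreover have "card (odd_comps V E S T - ?A) \<le> card (odd_comps V E S (T - {u}))"
    using card_mono[OF fin(2) sub] .
  ultimately show ?thesis unfolding qST_def by linarith
qed


lemma delta_remove:
  assumes sg: "simple_graph V E" and u: "u \<in> T" "u \<notin> S" "u \<in> V" and TV: "T \<subseteq> V"
  shows "delta V E X S (T - {u}) \<le> delta V E X S T - int (deg_minus V E S u)
           + (if u \<in> X then 2 else 0) + int (card {C \<in> odd_comps V E S T. \<exists>w\<in>C. E u w})"
proof -
  have finT: "finite T" using sg TV unfolding simple_graph_def using finite_subset by blast
  have s: "(\<Sum>v\<in>T. deg_minus V E S v) = deg_minus V E S u + (\<Sum>v\<in>T - {u}. deg_minus V E S v)"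
    using sum.remove[OF finT u(1)] .
  have c: "card (T \<inter> X) = card ((T - {u}) \<inter> X) + (if u \<in> X then 1 else 0)"
  proof (cases "u \<in> X")
    case True
    then have "T \<inter> X = insert u ((T - {u}) \<inter> X)" using u by auto
    then show ?thesis using True finT by simp
  next
    case False
    then have "T \<inter> X = (T - {u}) \<inter> X" by auto
    then show ?thesis using False by simp
  qed
  have q: "qST V E S T \<le> qST V E S (T - {u}) + card {C \<in> odd_comps V E S T. \<exists>w\<in>C. E u w}"
    using qST_remove[OF sg u] .
  show ?thesis unfolding delta_def using s c q by (auto split: if_splits)
qed

lemma deg_bound:
  assumes sg: "simple_graph V E" and B: "B \<subseteq> {w\<in>V-S. E u w}"
    and A: "A \<subseteq> components E (V - (S \<union> T))" and ex: "\<forall>C\<in>A. \<exists>w\<in>C. E u w \<and> w \<notin> B"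
  shows "card A + card B \<le> deg_minus V E S u"
  unfolding deg_minus_def
proof (rule pick)
  show "finite {w \<in> V - S. E u w}" using sg unfolding simple_graph_def by simp
  show "B \<subseteq> {w \<in> V - S. E u w}" by fact
  show "\<forall>C1\<in>A. \<forall>C2\<in>A. \<forall>w. w \<in> C1 \<longrightarrow> w \<in> C2 \<longrightarrow> C1 = C2"
    using comps_disj[OF sg_sym[OF sg]] A by blast
  show "\<forall>C\<in>A. \<exists>w\<in>C. w \<in> {w \<in> V - S. E u w} \<and> w \<notin> B"
    using ex A comps_sub by fastforce
qed

lemma sum_deg:
  assumes bip: "bipartite_with V E X Y" and S: "S \<subseteq> V" and T: "T \<subseteq> X" and ST: "S \<inter> T = {}"
  shows "(\<Sum>v\<in>T. deg_minus V E S v) = (\<Sum>C\<in>components E (V - (S \<union> T)). eps E T C)"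
proof -
  let ?W = "V - (S \<union> T)"
  have sg: "simple_graph V E" using bip unfolding bipartite_with_def by blast
  have finV: "finite V" using sg unfolding simple_graph_def by blast
  have TV: "T \<subseteq> V" using T bip unfolding bipartite_with_def by blast
  have finT: "finite T" using finV TV finite_subset by blast
  have d: "deg_minus V E S v = card {w\<in>?W. E v w}" if "v \<in> T" for v
  proof -
    have "{w\<in>V-S. E v w} = {w\<in>?W. E v w}"
      using that T bip unfolding bipartite_with_def by blast
    then show ?thesis unfolding deg_minus_def by simp
  qed
  have "(\<Sum>v\<in>T. deg_minus V E S v) = (\<Sum>v\<in>T. card {w\<in>?W. E v w})"
    using d by simp
  also have "\<dots> = card (SIGMA v:T. {w\<in>?W. E v w})"
    using finT finV by (subst card_SigmaI) auto
  also have "(SIGMA v:T. {w\<in>?W. E v w}) = (\<Union>C\<in>components E ?W. {(a, b). a \<in> T \<and> b \<in> C \<and> E a b})"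
    using comps_Union[of E ?W] by auto
  also have "card \<dots> = (\<Sum>C\<in>components E ?W. card {(a, b). a \<in> T \<and> b \<in> C \<and> E a b})"
  proof (rule card_UN_disjoint)
    show "finite (components E ?W)" using comps_finite finV by blast
    show "\<forall>C\<in>components E ?W. finite {(a, b). a \<in> T \<and> b \<in> C \<and> E a b}"
    proof
      fix C assume "C \<in> components E ?W"
      then have "{(a, b). a \<in> T \<and> b \<in> C \<and> E a b} \<subseteq> V \<times> V" using comps_sub TV by blast
      then show "finite {(a, b). a \<in> T \<and> b \<in> C \<and> E a b}" using finV finite_subset by blast
    qed
    show "\<forall>i\<in>components E ?W. \<forall>j\<in>components E ?W. i \<noteq> j \<longrightarrow>
      {(a, b). a \<in> T \<and> b \<in> i \<and> E a b} \<inter> {(a, b). a \<in> T \<and> b \<in> j \<and> E a b} = {}"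
      using comps_disj[OF sg_sym[OF sg]] by blast
  qed
  finally show ?thesis unfolding eps_def .
qed

lemma delta_even:
  assumes bip: "bipartite_with V E X Y" and S: "S \<subseteq> V" and T: "T \<subseteq> X" and ST: "S \<inter> T = {}"
  shows "even (delta V E X S T)"
proof -
  have finV: "finite V" using bip unfolding bipartite_with_def simple_graph_def by blast
  have q: "qST V E S T = card {C\<in>components E (V - (S \<union> T)). odd (eps E T C)}"
    unfolding qST_def odd_comps_def T_odd_def ..
  have "even ((\<Sum>C\<in>components E (V - (S \<union> T)). eps E T C) + card {C\<in>components E (V - (S \<union> T)). odd (eps E T C)})"
    using parity_sum comps_finite finV by blast
  then have e: "even ((\<Sum>v\<in>T. deg_minus V E S v) + qST V E S T)"
    using sum_deg[OF assms] q by simp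
  then obtain k where k: "(\<Sum>v\<in>T. deg_minus V E S v) + qST V E S T = 2 * k" by (rule evenE)
  then have "int (\<Sum>v\<in>T. deg_minus V E S v) = 2 * int k - int (qST V E S T)" by linarith
  then have "delta V E X S T = 2 * (int (card S) + int k - int (card (T \<inter> X)) - int (qST V E S T))"
    unfolding delta_def by simp
  then show ?thesis by simp
qed


theorem lemma2p3:
  fixes V :: "'a set" and E :: "'a \<Rightarrow> 'a \<Rightarrow> bool" and X Y S T :: "'a set"
  assumes "bipartite_with V E X Y"
    and "min_barrier V E X Y S T"
  shows "T \<subseteq> X
    \<and> (\<forall>C \<in> components E (V - (S \<union> T)). \<not> T_odd E T C \<longrightarrow> eps E T C = 0)
    \<and> (\<forall>C \<in> components E (V - (S \<union> T)). T_odd E T C \<longrightarrow> (\<forall>u \<in> T. eps E {u} C \<le> 1))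
    \<and> real (card T) - real (card S)
           > (1/2) * (\<Sum>D \<in> odd_comps V E S T. (real (eps E T D) - 1))"
proof -
  note bip = assms(1)
  have sg: "simple_graph V E" using bip unfolding bipartite_with_def by blast
  have finV: "finite V" using sg unfolding simple_graph_def by blast
  have XV: "X \<subseteq> V" "X \<union> Y = V" "X \<inter> Y = {}" using bip unfolding bipartite_with_def by auto
  have bar: "S \<subseteq> X" "T \<subseteq> X \<union> Y" "S \<inter> T = {}" "delta V E X S T < 0"
    using assms(2) unfolding min_barrier_def barrier_def by auto
  have minb: "\<And>S' T'. barrier V E X Y S' T' \<Longrightarrow> card (S \<union> T) \<le> card (S' \<union> T')"
    using assms(2) unfolding min_barrier_def by auto
  have SV: "S \<subseteq> V" using bar XV by blast
  have TV: "T \<subseteq> V" using bar XV by blast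
  have nodec: "delta V E X S (T - {u}) \<ge> 0" if u: "u \<in> T" for u
  proof (rule ccontr)
    assume "\<not> 0 \<le> delta V E X S (T - {u})"
    then have "barrier V E X Y S (T - {u})" using bar unfolding barrier_def by auto
    then have "card (S \<union> T) \<le> card (S \<union> (T - {u}))" by (rule minb)
    moreover have "S \<union> (T - {u}) = (S \<union> T) - {u}" using u bar by auto
    moreover have "finite (S \<union> T)" using SV TV finV finite_subset by blast
    ultimately show False using u
      by (metis Un_iff card_Diff1_less not_le)
  qed
  let ?W = "V - (S \<union> T)"
  define A where "A u = {C \<in> odd_comps V E S T. \<exists>w\<in>C. E u w}" for u
  have Asub: "A u \<subseteq> components E ?W" for u unfolding A_def odd_comps_def by auto
  have dr: "delta V E X S (T - {u}) \<le> delta V E X S T - int (deg_minus V E S u)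
           + (if u \<in> X then 2 else 0) + int (card (A u))" if "u \<in> T" for u
  proof -
    have a: "u \<notin> S" using that bar(3) by blast
    have b: "u \<in> V" using that TV by blast
    show ?thesis unfolding A_def by (rule delta_remove[OF sg that a b TV])
  qed
  have i: "T \<subseteq> X"
  proof
    fix u assume u: "u \<in> T"
    show "u \<in> X"
    proof (rule ccontr)
      assume nX: "u \<notin> X"
      have "card (A u) + card ({}::'a set) \<le> deg_minus V E S u"
        by (rule deg_bound[OF sg _ Asub]) (auto simp: A_def)
      then show False using dr[OF u] nX nodec[OF u] bar(4) by simp
    qed
  qed
  have ev: "even (delta V E X S T)" using delta_even[OF bip SV i bar(3)] .
  have ev': "even (delta V E X S (T - {u}))" for u
  proof -
    have "T - {u} \<subseteq> X" using i by blast
    moreover have "S \<inter> (T - {u}) = {}" using bar(3) by blast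
    ultimately show ?thesis by (rule delta_even[OF bip SV])
  qed
  have key: "False" if u: "u \<in> T" and big: "card (A u) + 1 \<le> deg_minus V E S u" for u
  proof -
    have "u \<in> X" using u i by blast
    then have "delta V E X S (T - {u}) \<le> delta V E X S T + 1" using dr[OF u] big by simp
    moreover have "even (delta V E X S (T - {u}))" by (rule ev')
    ultimately have "delta V E X S (T - {u}) \<le> delta V E X S T" using ev
      by (metis add.commute even_add even_plus_one_iff le_less odd_one zless_add1_eq)
    then show False using nodec[OF u] bar(4) by simp
  qed
  have ii: "\<forall>C \<in> components E ?W. \<not> T_odd E T C \<longrightarrow> eps E T C = 0"
  proof (intro ballI impI)
    fix C assume C: "C \<in> components E ?W" and ne: "\<not> T_odd E T C"
    show "eps E T C = 0"
    proof (rule ccontr)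
      assume "eps E T C \<noteq> 0"
      then have "{(a, b). a \<in> T \<and> b \<in> C \<and> E a b} \<noteq> {}" unfolding eps_def by (metis card.empty)
      then obtain u b where ub: "u \<in> T" "b \<in> C" "E u b" by blast
      have "card (A u) + card {b} \<le> deg_minus V E S u"
      proof (rule deg_bound[OF sg _ Asub])
        show "{b} \<subseteq> {w \<in> V - S. E u w}" using ub C comps_sub by blast
        show "\<forall>C'\<in>A u. \<exists>w\<in>C'. E u w \<and> w \<notin> {b}"
        proof
          fix C' assume C': "C' \<in> A u"
          then obtain w where w: "w \<in> C'" "E u w" unfolding A_def by blast
          have "C' \<noteq> C" using C' ne unfolding A_def odd_comps_def by auto
          then have "w \<noteq> b" using comps_disj[OF sg_sym[OF sg] C] Asub C' w ub by blast
          then show "\<exists>w\<in>C'. E u w \<and> w \<notin> {b}" using w by blast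
        qed
      qed
      then show False using key[OF ub(1)] by simp
    qed
  qed
  have iii: "\<forall>C \<in> components E ?W. T_odd E T C \<longrightarrow> (\<forall>u \<in> T. eps E {u} C \<le> 1)"
  proof (intro ballI impI)
    fix C u assume C: "C \<in> components E ?W" and od: "T_odd E T C" and u: "u \<in> T"
    show "eps E {u} C \<le> 1"
    proof (rule ccontr)
      assume "\<not> eps E {u} C \<le> 1"
      moreover have "{(a, b). a \<in> {u} \<and> b \<in> C \<and> E a b} = (\<lambda>b. (u, b)) ` {b\<in>C. E u b}" by auto
      moreover have "inj_on (\<lambda>b. (u, b)) {b\<in>C. E u b}" by (auto intro: inj_onI)
      ultimately have c2: "2 \<le> card {b\<in>C. E u b}" unfolding eps_def by (simp add: card_image)
      have "finite {b\<in>C. E u b}"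
      proof (rule ccontr)
        assume "infinite {b\<in>C. E u b}"
        then have "card {b\<in>C. E u b} = 0" by (rule card.infinite)
        with c2 show False by simp
      qed
      then obtain b1 b2 where b: "b1 \<in> C" "E u b1" "b2 \<in> C" "E u b2" "b1 \<noteq> b2"
        using c2 card_le_Suc0_iff_eq[of "{b\<in>C. E u b}"] by auto
      have "card (A u) + card {b1} \<le> deg_minus V E S u"
      proof (rule deg_bound[OF sg _ Asub])
        show "{b1} \<subseteq> {w \<in> V - S. E u w}" using b C comps_sub by blast
        show "\<forall>C'\<in>A u. \<exists>w\<in>C'. E u w \<and> w \<notin> {b1}"
        proof
          fix C' assume C': "C' \<in> A u"
          then obtain w where w: "w \<in> C'" "E u w" unfolding A_def by blast
          show "\<exists>w\<in>C'. E u w \<and> w \<notin> {b1}"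
          proof (cases "w = b1")
            case True
            then have "C' = C" using comps_disj[OF sg_sym[OF sg] C] Asub C' w b by blast
            then show ?thesis using b by blast
          next
            case False then show ?thesis using w by blast
          qed
        qed
      qed
      then show False using key[OF u] by simp
    qed
  qed
  have finC: "finite (components E ?W)" using comps_finite finV by blast
  have oc: "odd_comps V E S T \<subseteq> components E ?W" unfolding odd_comps_def by auto
  have "(\<Sum>v\<in>T. deg_minus V E S v) = (\<Sum>C\<in>components E ?W. eps E T C)"
    using sum_deg[OF bip SV i bar(3)] .
  also have "\<dots> = (\<Sum>C\<in>odd_comps V E S T. eps E T C)"
    using ii by (intro sum.mono_neutral_right[OF finC oc]) (auto simp: odd_comps_def)
  finally have sd: "(\<Sum>v\<in>T. deg_minus V E S v) = (\<Sum>C\<in>odd_comps V E S T. eps E T C)" .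
  have TX: "T \<inter> X = T" using i by blast
  have "2 * card S + (\<Sum>C\<in>odd_comps V E S T. eps E T C) < 2 * card T + card (odd_comps V E S T)"
    using bar(4) unfolding delta_def qST_def sd TX by linarith
  then have r: "2 * real (card S) + real (\<Sum>C\<in>odd_comps V E S T. eps E T C) < 2 * real (card T) + real (card (odd_comps V E S T))"
    by (metis (mono_tags, lifting) of_nat_add of_nat_less_iff of_nat_mult of_nat_numeral)
  have "(\<Sum>D \<in> odd_comps V E S T. (real (eps E T D) - 1)) = real (\<Sum>C\<in>odd_comps V E S T. eps E T C) - real (card (odd_comps V E S T))"
    by (simp add: sum_subtractf)
  then have iv: "real (card T) - real (card S) > (1/2) * (\<Sum>D \<in> odd_comps V E S T. (real (eps E T D) - 1))"
    using r by simp
  show ?thesis using i ii iii iv by blast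
qed

end
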